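(* For every $d\ge1$, $\theta^{\rm U}(1,d)=0$.
   Context: For integers $d\ge1$ and $1\le k\le 2d$, let each vertex $x\in\mathbb{Z}^d$, independently of all others, choose a uniformly random subset of exactly $k$ of its $2d$ nearest neighbors (in $\ell_1$-distance). The undirected $k$-neighbor graph ($k$-UnG) on $\mathbb{Z}^d$ has an undirected edge between nearest neighbors $x,y$ whenever $x$ chose $y$ or $y$ chose $x$ (or both). We write $\theta^{\rm U}(k,d)=\mathbb{P}(o\rightsquigarrow\infty\text{ in the $k$-UnG on }\mathbb{Z}^d)$, where $o$ is the origin and $o\rightsquigarrow\infty$ is the event that there is an infinite self-avoiding path of edges of the $k$-UnG starting at $o$ (equivalently, the connected component of $o$ is infinite). *)

theory Defs
  imports "HOL-Probability.Probability"
begin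

text \<open>Points of Z^d are encoded as functions nat => int vanishing at all coordinates >= d.\<close>

definition zd :: "nat \<Rightarrow> (nat \<Rightarrow> int) set" where
  "zd d = {x. \<forall>i\<ge>d. x i = 0}"

definition origin :: "nat \<Rightarrow> int" where
  "origin = (\<lambda>_. 0)"

definition nbrs :: "nat \<Rightarrow> (nat \<Rightarrow> int) \<Rightarrow> (nat \<Rightarrow> int) set" where
  "nbrs d x = {y. \<exists>i<d. \<exists>s\<in>{1, -1}. y = (\<lambda>j. if j = i then x j + s else x j)}"

definition choice_pmf :: "nat \<Rightarrow> nat \<Rightarrow> (nat \<Rightarrow> int) \<Rightarrow> (nat \<Rightarrow> int) set pmf" where
  "choice_pmf d k x = pmf_of_set {S. S \<subseteq> nbrs d x \<and> card S = k}"

definition kUnG :: "nat \<Rightarrow> nat \<Rightarrow> ((nat \<Rightarrow> int) \<Rightarrow> (nat \<Rightarrow> int) set) measure" where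
  "kUnG d k = PiM (zd d) (\<lambda>x. measure_pmf (choice_pmf d k x))"

definition ung_edge :: "nat \<Rightarrow> ((nat \<Rightarrow> int) \<Rightarrow> (nat \<Rightarrow> int) set) \<Rightarrow> (nat \<Rightarrow> int) \<Rightarrow> (nat \<Rightarrow> int) \<Rightarrow> bool" where
  "ung_edge d \<omega> x y \<longleftrightarrow> y \<in> nbrs d x \<and> (y \<in> \<omega> x \<or> x \<in> \<omega> y)"

definition perc_event :: "nat \<Rightarrow> nat \<Rightarrow> ((nat \<Rightarrow> int) \<Rightarrow> (nat \<Rightarrow> int) set) set" where
  "perc_event d k = {\<omega> \<in> space (kUnG d k).
     \<exists>p :: nat \<Rightarrow> (nat \<Rightarrow> int). p 0 = origin \<and> inj p \<and>
        (\<forall>n. p n \<in> zd d \<and> ung_edge d \<omega> (p n) (p (Suc n)))}"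

definition theta_U :: "nat \<Rightarrow> nat \<Rightarrow> real" where
  "theta_U k d = measure (kUnG d k) (perc_event d k)"

end

theory Submission
  imports Defs
begin


definition stp :: "(nat \<Rightarrow> int) \<Rightarrow> nat \<times> int \<Rightarrow> (nat \<Rightarrow> int)" where
  "stp x p = (\<lambda>j. if j = fst p then x j + snd p else x j)"

lemma nbrs_img: "nbrs d x = stp x ` ({..<d} \<times> {1, -1})"
  unfolding nbrs_def stp_def by force

lemma stp_inj: "inj_on (stp x) ({..<d} \<times> {1, -1})"
proof (rule inj_onI)
  fix p q assume p: "p \<in> {..<d} \<times> {1, -1}" and q: "q \<in> {..<d} \<times> {1, -1}" and e: "stp x p = stp x q"
  obtain i s where pi: "p = (i, s)" by (cases p)
  obtain i' s' where qi: "q = (i', s')" by (cases q)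
  have "stp x p i = stp x q i" "stp x p i' = stp x q i'" using e by auto
  then show "p = q" using p q unfolding pi qi stp_def by (auto split: if_splits)
qed

lemma finite_nbrs: "finite (nbrs d x)"
  unfolding nbrs_img by auto

lemma card_nbrs: "card (nbrs d x) = 2 * d"
  unfolding nbrs_img using stp_inj[of x d] by (simp add: card_image card_cartesian_product)

lemma nbrs_sym: "y \<in> nbrs d x \<Longrightarrow> x \<in> nbrs d y"
  unfolding nbrs_def
  apply clarify
  subgoal for i s by (intro exI[of _ i] conjI bexI[of _ "-s"]) (auto simp: fun_eq_iff)
  done

lemma nbrs_irrefl: "x \<notin> nbrs d x"
  unfolding nbrs_def by (auto simp: fun_eq_iff)

lemma nbrs_zd: "x \<in> zd d \<Longrightarrow> y \<in> nbrs d x \<Longrightarrow> y \<in> zd d"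
  unfolding nbrs_def zd_def by auto

lemma origin_zd: "origin \<in> zd d"
  unfolding origin_def zd_def by auto

lemma countable_zd: "countable (zd d)"
proof -
  have "zd d \<subseteq> range (\<lambda>l::int list. \<lambda>i. if i < length l then l ! i else 0)"
  proof
    fix x assume "x \<in> zd d"
    then have "x = (\<lambda>i. if i < length (map x [0..<d]) then map x [0..<d] ! i else 0)"
      unfolding zd_def by (auto simp: fun_eq_iff)
    then show "x \<in> range (\<lambda>l::int list. \<lambda>i. if i < length l then l ! i else 0)" by blast
  qed
  then show ?thesis by (rule countable_subset) simp
qed



definition spath :: "nat \<Rightarrow> (nat \<Rightarrow> int) list \<Rightarrow> bool" where
  "spath d w \<longleftrightarrow> w \<noteq> [] \<and> w ! 0 = origin \<and> distinct w \<and> set w \<subseteq> zd d \<and>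
     (\<forall>i. Suc i < length w \<longrightarrow> w ! Suc i \<in> nbrs d (w ! i))"

definition opath :: "nat \<Rightarrow> ((nat \<Rightarrow> int) \<Rightarrow> (nat \<Rightarrow> int) set) \<Rightarrow> (nat \<Rightarrow> int) list \<Rightarrow> bool" where
  "opath d \<omega> w \<longleftrightarrow> w \<noteq> [] \<and> w ! 0 = origin \<and> distinct w \<and> set w \<subseteq> zd d \<and>
     (\<forall>i. Suc i < length w \<longrightarrow> ung_edge d \<omega> (w ! i) (w ! Suc i))"

definition Pn :: "nat \<Rightarrow> nat \<Rightarrow> (nat \<Rightarrow> int) list set" where
  "Pn d n = {w. spath d w \<and> length w = Suc n}"

lemma opath_spath: "opath d \<omega> w \<Longrightarrow> spath d w"
  unfolding opath_def spath_def ung_edge_def by auto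

lemma Pn_0: "Pn d 0 = {[origin]}"
  unfolding Pn_def spath_def using origin_zd by (auto simp: length_Suc_conv)

lemma Pn_Suc: "Pn d (Suc n) \<subseteq> (\<lambda>(w, y). w @ [y]) ` (SIGMA w:Pn d n. nbrs d (last w) - set w)"
proof
  fix v assume v: "v \<in> Pn d (Suc n)"
  then have len: "length v = Suc (Suc n)" and sp: "spath d v" by (auto simp: Pn_def)
  define w where "w = butlast v"
  define y where "y = last v"
  have vw: "v = w @ [y]" unfolding w_def y_def using len
    by (metis append_butlast_last_id list.size(3) nat.simps(3))
  have lw: "length w = Suc n" using len vw by simp
  have e: "w ! Suc i \<in> nbrs d (w ! i)" if "Suc i < length w" for i
    using sp lw that unfolding vw spath_def by (auto simp: nth_append dest!: spec[of _ i])
  have "spath d w" using sp lw e unfolding vw spath_def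
    by (auto simp: nth_append)
  moreover have "y \<in> nbrs d (w ! n)"
    using sp lw unfolding vw spath_def
    by (auto simp: nth_append dest!: spec[of _ n])
  moreover have "last w = w ! n" using lw by (subst last_conv_nth) auto
  moreover have "y \<notin> set w" using sp unfolding vw spath_def by auto
  ultimately have "(w, y) \<in> (SIGMA w:Pn d n. nbrs d (last w) - set w)"
    using lw unfolding Pn_def by simp
  then show "v \<in> (\<lambda>(w, y). w @ [y]) ` (SIGMA w:Pn d n. nbrs d (last w) - set w)"
    using vw by force
qed

lemma finite_Pn: "finite (Pn d n)"
proof (induction n)
  case 0 then show ?case by (simp add: Pn_0)
next
  case (Suc n)
  show ?case by (rule finite_subset[OF Pn_Suc]) (auto intro!: finite_SigmaI Suc finite_nbrs)
qed

lemma card_Pn_step: "card (Pn d (Suc n)) \<le> (\<Sum>w\<in>Pn d n. card (nbrs d (last w) - set w))"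
proof -
  have fin: "finite (SIGMA w:Pn d n. nbrs d (last w) - set w)"
    by (intro finite_SigmaI finite_Pn) (simp add: finite_nbrs)
  have "card (Pn d (Suc n)) \<le> card ((\<lambda>(w, y). w @ [y]) ` (SIGMA w:Pn d n. nbrs d (last w) - set w))"
    by (rule card_mono[OF finite_imageI[OF fin] Pn_Suc])
  also have "\<dots> \<le> card (SIGMA w:Pn d n. nbrs d (last w) - set w)"
    by (rule card_image_le[OF fin])
  also have "\<dots> = (\<Sum>w\<in>Pn d n. card (nbrs d (last w) - set w))"
    by (rule card_SigmaI) (simp_all add: finite_Pn finite_nbrs)
  finally show ?thesis .
qed

lemma card_Pn: "card (Pn d (Suc n)) \<le> 2 * d * (2 * d - 1) ^ n"
proof (induction n)
  case 0
  have "card (Pn d 1) \<le> (\<Sum>w\<in>Pn d 0. card (nbrs d (last w) - set w))"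
    using card_Pn_step[of d 0] by simp
  also have "\<dots> = card (nbrs d origin - {origin})" by (simp add: Pn_0)
  also have "\<dots> \<le> card (nbrs d origin)" by (rule card_mono) (auto simp: finite_nbrs)
  finally show ?case by (simp add: card_nbrs)
next
  case (Suc n)
  have "card (Pn d (Suc (Suc n))) \<le> (\<Sum>w\<in>Pn d (Suc n). card (nbrs d (last w) - set w))"
    by (rule card_Pn_step)
  also have "\<dots> \<le> (\<Sum>w\<in>Pn d (Suc n). 2 * d - 1)"
  proof (rule sum_mono)
    fix w assume w: "w \<in> Pn d (Suc n)"
    then have l: "length w = Suc (Suc n)" and sp: "spath d w" by (auto simp: Pn_def)
    have "\<forall>i. Suc i < length w \<longrightarrow> w ! Suc i \<in> nbrs d (w ! i)" using sp unfolding spath_def by blast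
    then have "w ! Suc n \<in> nbrs d (w ! n)" using l by simp
    moreover have "last w = w ! Suc n" using l by (subst last_conv_nth) auto
    ultimately have wn: "w ! n \<in> nbrs d (last w)" by (simp add: nbrs_sym)
    moreover have "w ! n \<in> set w" using l by simp
    ultimately have "card (nbrs d (last w) - set w) \<le> card (nbrs d (last w) - {w ! n})"
      by (intro card_mono) (auto simp: finite_nbrs)
    also have "\<dots> = 2 * d - 1" using wn by (simp add: card_nbrs finite_nbrs)
    finally show "card (nbrs d (last w) - set w) \<le> 2 * d - 1" .
  qed
  also have "\<dots> = card (Pn d (Suc n)) * (2 * d - 1)" by simp
  also have "\<dots> \<le> 2 * d * (2 * d - 1) ^ n * (2 * d - 1)" using Suc by (intro mult_right_mono) auto
  finally show ?case by (simp add: algebra_simps)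
qed

lemma opath_prefix: assumes "opath d \<omega> (v @ u)" "v \<noteq> []" shows "opath d \<omega> v"
proof -
  have e: "ung_edge d \<omega> (v!i) (v!Suc i)" if "Suc i < length v" for i
    using assms(1) that unfolding opath_def by (auto simp: nth_append dest!: spec[of _ i])
  then show ?thesis using assms unfolding opath_def by (auto simp: nth_append)
qed

lemma koenig:
  assumes all: "\<And>n. \<exists>w. length w = Suc n \<and> opath d \<omega> w"
  shows "\<exists>p. p 0 = origin \<and> inj p \<and> (\<forall>n. p n \<in> zd d \<and> ung_edge d \<omega> (p n) (p (Suc n)))"
proof -
  define good where "good w \<longleftrightarrow> opath d \<omega> w \<and> (\<forall>m. \<exists>u. length u = m \<and> opath d \<omega> (w @ u))" for w
  have good0: "good [origin]"
    unfolding good_def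
  proof (intro conjI allI)
    fix m
    obtain w where w: "length w = Suc m" "opath d \<omega> w" using all by blast
    then have "w = [origin] @ tl w" unfolding opath_def by (cases w) auto
    then show "\<exists>u. length u = m \<and> opath d \<omega> ([origin] @ u)" using w by (intro exI[of _ "tl w"]) auto
    then show "opath d \<omega> [origin]" using opath_prefix by blast
  qed
  have step: "\<exists>y. good (w @ [y])" if g: "good w" for w
  proof (rule ccontr)
    assume ng: "\<not> ?thesis"
    define C where "C = nbrs d (last w)"
    have "\<forall>y\<in>C. \<exists>m. \<not> (\<exists>u. length u = m \<and> opath d \<omega> (w @ [y] @ u))"
    proof
      fix y assume "y \<in> C"
      show "\<exists>m. \<not> (\<exists>u. length u = m \<and> opath d \<omega> (w @ [y] @ u))"
      proof (rule ccontr)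
        assume "\<not> ?thesis"
        then have "\<forall>m. \<exists>u. length u = m \<and> opath d \<omega> ((w @ [y]) @ u)" by simp
        moreover from this have "opath d \<omega> (w @ [y])" using opath_prefix by blast
        ultimately show False using ng unfolding good_def by blast
      qed
    qed
    then obtain mf where mf: "\<And>y. y \<in> C \<Longrightarrow> \<not> (\<exists>u. length u = mf y \<and> opath d \<omega> (w @ [y] @ u))"
      by metis
    have fC: "finite C" unfolding C_def by (rule finite_nbrs)
    define M where "M = Max (mf ` C)"
    obtain u where u: "length u = Suc M" "opath d \<omega> (w @ u)" using g unfolding good_def by blast
    then obtain y u' where yu: "u = y # u'" by (cases u) auto
    have "w \<noteq> []" using g unfolding good_def opath_def by auto
    have all: "\<forall>i. Suc i < length (w @ u) \<longrightarrow> ung_edge d \<omega> ((w @ u) ! i) ((w @ u) ! Suc i)"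
      using u(2) unfolding opath_def by blast
    have "Suc (length w - 1) < length (w @ u)" using yu \<open>w \<noteq> []\<close> by simp
    then have "ung_edge d \<omega> ((w @ u) ! (length w - 1)) ((w @ u) ! Suc (length w - 1))"
      using all by blast
    then have "ung_edge d \<omega> (w ! (length w - 1)) ((w @ u) ! length w)"
      using \<open>w \<noteq> []\<close> by (simp add: nth_append)
    then have "y \<in> C" using yu \<open>w \<noteq> []\<close> unfolding C_def ung_edge_def by (simp add: last_conv_nth nth_append)
    then have "mf y \<le> M" unfolding M_def using fC by simp
    have "opath d \<omega> (w @ [y] @ take (mf y) u')"
      using u(2) yu opath_prefix[of d \<omega> "w @ [y] @ take (mf y) u'" "drop (mf y) u'"] by simp
    moreover have "length (take (mf y) u') = mf y" using u yu \<open>mf y \<le> M\<close> by simp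
    ultimately show False using mf[OF \<open>y \<in> C\<close>] by blast
  qed
  define W where "W = rec_nat [origin] (\<lambda>_ w. w @ [SOME y. good (w @ [y])])"
  have W0: "W 0 = [origin]" and WS: "W (Suc n) = W n @ [SOME y. good (W n @ [y])]" for n
    unfolding W_def by simp_all
  have gW: "good (W n)" for n
  proof (induction n)
    case 0 then show ?case using good0 by (simp add: W0)
  next
    case (Suc n) then show ?case unfolding WS using step by (metis someI_ex)
  qed
  have lW: "length (W n) = Suc n" for n by (induction n) (simp_all add: W0 WS)
  have pre: "\<exists>u. W (n + k) = W n @ u" for n k
  proof (induction k)
    case 0 then show ?case by simp
  next
    case (Suc k) then show ?case by (auto simp: WS)
  qed
  define p where "p n = W n ! n" for n
  have pW: "W m ! n = p n" if "n \<le> m" for n m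
  proof -
    have "W m = W (n + (m - n))" using that by simp
    then obtain u where "W m = W n @ u" using pre[of n "m - n"] by auto
    then show ?thesis unfolding p_def using lW[of n] by (simp add: nth_append)
  qed
  have opW: "opath d \<omega> (W n)" for n using gW unfolding good_def by blast
  show ?thesis
  proof (intro exI[of _ p] conjI allI)
    show "p 0 = origin" unfolding p_def W0 by simp
    show "inj p"
    proof (rule injI)
      fix a b assume e: "p a = p b"
      have "W (max a b) ! a = W (max a b) ! b" using pW[of a "max a b"] pW[of b "max a b"] e by simp
      moreover have "distinct (W (max a b))" using opW unfolding opath_def by blast
      ultimately show "a = b" using lW[of "max a b"] by (simp add: nth_eq_iff_index_eq)
    qed
    fix n
    have "set (W n) \<subseteq> zd d" using opW[of n] unfolding opath_def by blast
    moreover have "p n \<in> set (W n)" unfolding p_def using lW[of n] by simp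
    ultimately show "p n \<in> zd d" by blast
    have "\<forall>i. Suc i < length (W (Suc n)) \<longrightarrow> ung_edge d \<omega> (W (Suc n) ! i) (W (Suc n) ! Suc i)"
      using opW[of "Suc n"] unfolding opath_def by blast
    then have "ung_edge d \<omega> (W (Suc n) ! n) (W (Suc n) ! Suc n)" using lW[of "Suc n"] by simp
    then show "ung_edge d \<omega> (p n) (p (Suc n))" using pW[of n "Suc n"] pW[of "Suc n" "Suc n"] by simp
  qed
qed



lemma space_kUnG: "space (kUnG d k) = (\<Pi>\<^sub>E x\<in>zd d. UNIV)"
  by (simp add: kUnG_def space_PiM)

lemma meas_coord:
  assumes "x \<in> zd d"
  shows "{\<omega> \<in> space (kUnG d k). P (\<omega> x)} \<in> sets (kUnG d k)"
proof -
  have "(\<lambda>\<omega>. \<omega> x) \<in> measurable (kUnG d k) (measure_pmf (choice_pmf d k x))"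
    unfolding kUnG_def using assms by (rule measurable_component_singleton)
  then have "(\<lambda>\<omega>. \<omega> x) -` {S. P S} \<inter> space (kUnG d k) \<in> sets (kUnG d k)"
    by (rule measurable_sets) simp
  moreover have "{\<omega> \<in> space (kUnG d k). P (\<omega> x)} = (\<lambda>\<omega>. \<omega> x) -` {S. P S} \<inter> space (kUnG d k)"
    by auto
  ultimately show ?thesis by simp
qed

lemma meas_edge:
  assumes "x \<in> zd d" "y \<in> zd d"
  shows "{\<omega> \<in> space (kUnG d k). ung_edge d \<omega> x y} \<in> sets (kUnG d k)"
proof -
  have "{\<omega> \<in> space (kUnG d k). ung_edge d \<omega> x y} =
    (if y \<in> nbrs d x then {\<omega> \<in> space (kUnG d k). y \<in> \<omega> x} \<union> {\<omega> \<in> space (kUnG d k). x \<in> \<omega> y} else {})"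
    by (auto simp: ung_edge_def)
  then show ?thesis using meas_coord[OF assms(1)] meas_coord[OF assms(2)] by auto
qed

definition En :: "nat \<Rightarrow> nat \<Rightarrow> nat \<Rightarrow> ((nat \<Rightarrow> int) \<Rightarrow> (nat \<Rightarrow> int) set) set" where
  "En d k n = {\<omega> \<in> space (kUnG d k). \<exists>w. length w = Suc n \<and> opath d \<omega> w}"

lemma En_eq: "En d k n = {\<omega> \<in> space (kUnG d k). \<exists>w\<in>Pn d n. \<forall>i\<in>{..<n}. ung_edge d \<omega> (w ! i) (w ! Suc i)}"
proof (intro set_eqI iffI)
  fix \<omega> assume "\<omega> \<in> En d k n"
  then obtain w where w: "\<omega> \<in> space (kUnG d k)" "length w = Suc n" "opath d \<omega> w" unfolding En_def by blast
  then have "w \<in> Pn d n" unfolding Pn_def using opath_spath by blast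
  moreover have "\<forall>i\<in>{..<n}. ung_edge d \<omega> (w ! i) (w ! Suc i)" using w unfolding opath_def by auto
  ultimately show "\<omega> \<in> {\<omega> \<in> space (kUnG d k). \<exists>w\<in>Pn d n. \<forall>i\<in>{..<n}. ung_edge d \<omega> (w ! i) (w ! Suc i)}"
    using w by blast
next
  fix \<omega> assume "\<omega> \<in> {\<omega> \<in> space (kUnG d k). \<exists>w\<in>Pn d n. \<forall>i\<in>{..<n}. ung_edge d \<omega> (w ! i) (w ! Suc i)}"
  then obtain w where w: "\<omega> \<in> space (kUnG d k)" "w \<in> Pn d n" "\<forall>i\<in>{..<n}. ung_edge d \<omega> (w ! i) (w ! Suc i)" by blast
  then have "opath d \<omega> w" unfolding Pn_def spath_def opath_def by auto
  then show "\<omega> \<in> En d k n" using w unfolding En_def Pn_def by blast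
qed

lemma En_sets: "En d k n \<in> sets (kUnG d k)"
  unfolding En_eq
proof (intro sets.sets_Collect_finite_Ex sets.sets_Collect_finite_All finite_Pn finite_lessThan)
  fix w i assume "w \<in> Pn d n" "i \<in> {..<n}"
  then have "w ! i \<in> zd d" "w ! Suc i \<in> zd d" unfolding Pn_def spath_def by (auto dest!: nth_mem)
  then show "{\<omega> \<in> space (kUnG d k). ung_edge d \<omega> (w ! i) (w ! Suc i)} \<in> sets (kUnG d k)"
    by (rule meas_edge)
qed

lemma perc_eq: "perc_event d k = (\<Inter>n. En d k n)"
proof (intro set_eqI iffI)
  fix \<omega> assume "\<omega> \<in> perc_event d k"
  then obtain p where sp: "\<omega> \<in> space (kUnG d k)" and p: "p 0 = origin" "inj p" "\<forall>n. p n \<in> zd d \<and> ung_edge d \<omega> (p n) (p (Suc n))"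
    unfolding perc_event_def by blast
  show "\<omega> \<in> (\<Inter>n. En d k n)"
  proof
    fix n
    have "opath d \<omega> (map p [0..<Suc n])"
      unfolding opath_def using p by (auto simp: distinct_map inj_on_def inj_def nth_Cons' simp del: upt_Suc)
    then show "\<omega> \<in> En d k n" unfolding En_def using sp by (intro CollectI conjI exI[of _ "map p [0..<Suc n]"]) auto
  qed
next
  fix \<omega> assume a: "\<omega> \<in> (\<Inter>n. En d k n)"
  then have "\<omega> \<in> space (kUnG d k)" unfolding En_def by blast
  moreover have "\<And>n. \<exists>w. length w = Suc n \<and> opath d \<omega> w" using a unfolding En_def by blast
  from koenig[OF this] have "\<exists>p. p 0 = origin \<and> inj p \<and> (\<forall>n. p n \<in> zd d \<and> ung_edge d \<omega> (p n) (p (Suc n)))" .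
  ultimately show "\<omega> \<in> perc_event d k" unfolding perc_event_def by blast
qed

lemma perc_sets: "perc_event d k \<in> sets (kUnG d k)"
proof -
  have "(\<Inter>n\<in>UNIV. En d k n) \<in> sets (kUnG d k)"
    by (rule sets.countable_INT') (auto intro: En_sets)
  then show ?thesis unfolding perc_eq by simp
qed



lemma ps_kUnG: "prob_space (kUnG d k)"
  unfolding kUnG_def by (rule prob_space_PiM) (rule prob_space_measure_pmf)

definition Sg :: "nat \<Rightarrow> (nat \<Rightarrow> int) \<Rightarrow> (nat \<Rightarrow> int) set set" where
  "Sg d x = {S. S \<subseteq> nbrs d x \<and> card S = 1}"

lemma Sg_eq: "Sg d x = (\<lambda>y. {y}) ` nbrs d x"
  unfolding Sg_def by (auto simp: card_1_singleton_iff)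

lemma Sg_fin: "finite (Sg d x)" unfolding Sg_eq by (simp add: finite_nbrs)

lemma Sg_card: "card (Sg d x) = 2 * d"
  unfolding Sg_eq by (subst card_image) (auto simp: inj_on_def card_nbrs)

lemma Sg_ne: "d \<ge> 1 \<Longrightarrow> Sg d x \<noteq> {}"
  using Sg_card[of d x] by auto

lemma pmf_choice:
  assumes "d \<ge> 1" "y \<in> nbrs d x"
  shows "pmf (choice_pmf d 1 x) {y} = 1 / (2 * d)"
proof -
  have "{y} \<in> Sg d x" using assms(2) unfolding Sg_eq by blast
  then show ?thesis unfolding choice_pmf_def Sg_def[symmetric]
    using pmf_of_set[OF Sg_ne[OF assms(1)] Sg_fin] Sg_card[of d x] by simp
qed

lemma AE_Sg:
  assumes "d \<ge> 1"
  shows "AE \<omega> in kUnG d 1. \<forall>x\<in>zd d. \<omega> x \<in> Sg d x"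
proof (subst AE_ball_countable[OF countable_zd], intro ballI)
  fix x assume x: "x \<in> zd d"
  have "AE S in measure_pmf (choice_pmf d 1 x). S \<in> Sg d x"
    using AE_measure_pmf[of "choice_pmf d 1 x"]
    unfolding choice_pmf_def Sg_def[symmetric] set_pmf_of_set[OF Sg_ne[OF assms] Sg_fin] .
  then show "AE \<omega> in kUnG d 1. \<omega> x \<in> Sg d x"
    unfolding kUnG_def by (rule AE_PiM_component[OF prob_space_measure_pmf x])
qed

lemma cyl:
  assumes d: "d \<ge> 1" and K: "finite K" "inj_on f K" "f ` K \<subseteq> zd d" and g: "\<And>i. i \<in> K \<Longrightarrow> g i \<in> nbrs d (f i)"
  shows "{\<omega> \<in> space (kUnG d 1). \<forall>i\<in>K. \<omega> (f i) = {g i}} \<in> sets (kUnG d 1)"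
    and "measure (kUnG d 1) {\<omega> \<in> space (kUnG d 1). \<forall>i\<in>K. \<omega> (f i) = {g i}} = (1 / (2 * real d)) ^ card K"
proof -
  define J where "J = f ` K"
  define t where "t x = g (the_inv_into K f x)" for x
  have tf: "t (f i) = g i" if "i \<in> K" for i unfolding t_def using that K(2) by (simp add: the_inv_into_f_f)
  let ?M = "\<lambda>x. measure_pmf (choice_pmf d 1 x)"
  have eq: "{\<omega> \<in> space (kUnG d 1). \<forall>i\<in>K. \<omega> (f i) = {g i}} = prod_emb (zd d) ?M J (\<Pi>\<^sub>E x\<in>J. {{t x}})"
    unfolding J_def by (auto simp: prod_emb_def kUnG_def space_PiM PiE_iff tf extensional_def)
  have JI: "J \<subseteq> zd d" "finite J" using K unfolding J_def by auto
  show "{\<omega> \<in> space (kUnG d 1). \<forall>i\<in>K. \<omega> (f i) = {g i}} \<in> sets (kUnG d 1)"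
    unfolding eq unfolding kUnG_def by (rule sets_PiM_I) (use JI in auto)
  have tn: "t x \<in> nbrs d x" if "x \<in> J" for x using that g tf unfolding J_def by auto
  have "emeasure (kUnG d 1) {\<omega> \<in> space (kUnG d 1). \<forall>i\<in>K. \<omega> (f i) = {g i}} = (\<Prod>x\<in>J. emeasure (?M x) {{t x}})"
    unfolding eq unfolding kUnG_def by (rule emeasure_PiM_emb) (use JI prob_space_measure_pmf in auto)
  also have "\<dots> = (\<Prod>x\<in>J. ennreal (1 / (2 * real d)))"
  proof (rule prod.cong)
    fix x assume "x \<in> J"
    then show "emeasure (?M x) {{t x}} = ennreal (1 / (2 * real d))"
      using pmf_choice[OF d tn[OF \<open>x \<in> J\<close>]] by (simp only: emeasure_pmf_single)
  qed simp
  also have "\<dots> = ennreal ((1 / (2 * real d)) ^ card K)"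
    using K(2) unfolding J_def by (simp add: card_image ennreal_power)
  finally show "measure (kUnG d 1) {\<omega> \<in> space (kUnG d 1). \<forall>i\<in>K. \<omega> (f i) = {g i}} = (1 / (2 * real d)) ^ card K"
    by (simp add: measure_def)
qed



definition tgt :: "nat \<Rightarrow> nat \<Rightarrow> nat" where
  "tgt j i = (if i < j then Suc i else i - 1)"

lemma orient:
  assumes op: "opath d \<omega> w" and len: "length w = Suc n"
    and sg: "\<And>x. x \<in> set w \<Longrightarrow> \<exists>y. \<omega> x = {y}"
  shows "\<exists>j\<le>n. \<forall>i\<in>{..n} - {j}. \<omega> (w ! i) = {w ! tgt j i}"
proof -
  define F where "F i \<longleftrightarrow> \<omega> (w ! i) = {w ! Suc i}" for i
  define B where "B i \<longleftrightarrow> \<omega> (w ! Suc i) = {w ! i}" for i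
  have dist: "distinct w" using op unfolding opath_def by blast
  have edges: "\<forall>i. Suc i < length w \<longrightarrow> ung_edge d \<omega> (w ! i) (w ! Suc i)"
    using op unfolding opath_def by blast
  have FB: "F i \<or> B i" if il: "i < n" for i
  proof -
    have "ung_edge d \<omega> (w ! i) (w ! Suc i)" using edges il len by simp
    then have e: "w ! Suc i \<in> \<omega> (w ! i) \<or> w ! i \<in> \<omega> (w ! Suc i)" unfolding ung_edge_def by blast
    have m1: "w ! i \<in> set w" "w ! Suc i \<in> set w" using il len by auto
    obtain a where a: "\<omega> (w ! i) = {a}" using sg[OF m1(1)] by auto
    obtain b where b: "\<omega> (w ! Suc i) = {b}" using sg[OF m1(2)] by auto
    show ?thesis using e a b unfolding F_def B_def by auto
  qed
  have BB: "B (Suc i)" if "B i" "Suc i < n" for i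
  proof -
    have "\<not> F (Suc i)"
    proof
      assume "F (Suc i)"
      then have "w ! Suc (Suc i) = w ! i" using \<open>B i\<close> unfolding F_def B_def by simp
      then show False using dist len \<open>Suc i < n\<close> by (simp add: nth_eq_iff_index_eq)
    qed
    then show ?thesis using FB[OF \<open>Suc i < n\<close>] by blast
  qed
  show ?thesis
  proof (cases "\<exists>i<n. \<not> F i")
    case False
    show ?thesis
    proof (intro exI[of _ n] conjI ballI)
      fix i assume "i \<in> {..n} - {n}"
      then have "i < n" by auto
      then show "\<omega> (w ! i) = {w ! tgt n i}" using False unfolding F_def tgt_def by auto
    qed simp
  next
    case True
    define j where "j = (LEAST i. i < n \<and> \<not> F i)"
    have j: "j < n" "\<not> F j" using LeastI_ex[OF True] unfolding j_def by auto
    have Fl: "F i" if "i < j" for i using not_less_Least[of i "\<lambda>i. i < n \<and> \<not> F i"] that j unfolding j_def by auto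
    have Bj: "B (j + k)" if "j + k < n" for k
      using that
    proof (induction k)
      case 0 then show ?case using FB[of j] j by simp
    next
      case (Suc k) then show ?case using BB[of "j + k"] by simp
    qed
    show ?thesis
    proof (intro exI[of _ j] conjI ballI)
      show "j \<le> n" using j by simp
      fix i assume i: "i \<in> {..n} - {j}"
      show "\<omega> (w ! i) = {w ! tgt j i}"
      proof (cases "i < j")
        case True then show ?thesis using Fl[OF True] unfolding F_def tgt_def by simp
      next
        case False
        then have "i > j" using i by auto
        then have "B (j + (i - 1 - j))" using i by (intro Bj) auto
        then show ?thesis using \<open>i > j\<close> False unfolding B_def tgt_def by simp
      qed
    qed
  qed
qed

definition Aw :: "nat \<Rightarrow> nat \<Rightarrow> (nat \<Rightarrow> int) list \<Rightarrow> nat \<Rightarrow> ((nat \<Rightarrow> int) \<Rightarrow> (nat \<Rightarrow> int) set) set" where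
  "Aw d n w j = {\<omega> \<in> space (kUnG d 1). \<forall>i\<in>{..n} - {j}. \<omega> (w ! i) = {w ! tgt j i}}"

lemma Aw_props:
  assumes d: "d \<ge> 1" and w: "w \<in> Pn d n" and j: "j \<le> n"
  shows "Aw d n w j \<in> sets (kUnG d 1)" "measure (kUnG d 1) (Aw d n w j) = (1 / (2 * real d)) ^ n"
proof -
  have l: "length w = Suc n" and sp: "spath d w" using w unfolding Pn_def by auto
  have dist: "distinct w" and zw: "set w \<subseteq> zd d"
    and nb: "\<forall>i. Suc i < length w \<longrightarrow> w ! Suc i \<in> nbrs d (w ! i)"
    using sp unfolding spath_def by auto
  have fin: "finite ({..n} - {j})" by simp
  have inj: "inj_on ((!) w) ({..n} - {j})"
    using dist l by (auto simp: inj_on_def nth_eq_iff_index_eq)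
  have "(!) w ` ({..n} - {j}) \<subseteq> set w" using l by auto
  then have sub: "(!) w ` ({..n} - {j}) \<subseteq> zd d" using zw by blast
  have g: "w ! tgt j i \<in> nbrs d (w ! i)" if "i \<in> {..n} - {j}" for i
  proof (cases "i < j")
    case True
    then show ?thesis using nb[rule_format, of i] that j l unfolding tgt_def by auto
  next
    case False
    then have "i > j" using that by auto
    then have "w ! Suc (i - 1) \<in> nbrs d (w ! (i - 1))" using nb[rule_format, of "i - 1"] that l by auto
    then show ?thesis using \<open>i > j\<close> False unfolding tgt_def by (simp add: nbrs_sym)
  qed
  have c: "card ({..n} - {j}) = n" using j by simp
  show "Aw d n w j \<in> sets (kUnG d 1)"
    unfolding Aw_def by (rule cyl(1)[OF d fin inj sub g])
  show "measure (kUnG d 1) (Aw d n w j) = (1 / (2 * real d)) ^ n"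
    unfolding Aw_def using cyl(2)[OF d fin inj sub g] c by simp
qed



lemma bound:
  assumes d: "d \<ge> 1"
  shows "measure (kUnG d 1) (perc_event d 1) \<le> real (Suc n) * real (card (Pn d n)) * (1 / (2 * real d)) ^ n"
proof -
  interpret P: prob_space "kUnG d 1" by (rule ps_kUnG)
  define I where "I = Pn d n \<times> {..n}"
  define U where "U = (\<Union>p\<in>I. Aw d n (fst p) (snd p))"
  have finI: "finite I" unfolding I_def by (simp add: finite_Pn)
  have Asets: "(\<lambda>p. Aw d n (fst p) (snd p)) ` I \<subseteq> sets (kUnG d 1)"
    using Aw_props(1)[OF d] unfolding I_def by auto
  have Usets: "U \<in> sets (kUnG d 1)" unfolding U_def using finI Asets by auto
  have "measure (kUnG d 1) (perc_event d 1) \<le> measure (kUnG d 1) (En d 1 n)"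
    by (rule P.finite_measure_mono) (auto simp: perc_eq En_sets)
  also have "\<dots> \<le> measure (kUnG d 1) U"
  proof (rule P.finite_measure_mono_AE[OF _ Usets])
    show "AE \<omega> in kUnG d 1. \<omega> \<in> En d 1 n \<longrightarrow> \<omega> \<in> U"
      using AE_Sg[OF d]
    proof (rule AE_mp, intro AE_I2 impI)
      fix \<omega> assume g: "\<forall>x\<in>zd d. \<omega> x \<in> Sg d x" and e: "\<omega> \<in> En d 1 n"
      then obtain w where w: "\<omega> \<in> space (kUnG d 1)" "length w = Suc n" "opath d \<omega> w"
        unfolding En_def by blast
      have "set w \<subseteq> zd d" using w(3) unfolding opath_def by blast
      then have sg: "\<exists>y. \<omega> x = {y}" if "x \<in> set w" for x using g that unfolding Sg_eq by blast
      obtain j where j: "j \<le> n" "\<forall>i\<in>{..n} - {j}. \<omega> (w ! i) = {w ! tgt j i}"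
        using orient[OF w(3) w(2) sg] by blast
      have "w \<in> Pn d n" using w opath_spath unfolding Pn_def by blast
      then have "(w, j) \<in> I" using j unfolding I_def by simp
      moreover have "\<omega> \<in> Aw d n w j" using j w unfolding Aw_def by blast
      ultimately show "\<omega> \<in> U" unfolding U_def by force
    qed
  qed
  also have "\<dots> \<le> (\<Sum>p\<in>I. measure (kUnG d 1) (Aw d n (fst p) (snd p)))"
    unfolding U_def by (rule P.finite_measure_subadditive_finite[OF finI Asets])
  also have "\<dots> = (\<Sum>p\<in>I. (1 / (2 * real d)) ^ n)"
  proof (rule sum.cong)
    fix p assume "p \<in> I"
    then have "fst p \<in> Pn d n" "snd p \<le> n" unfolding I_def by auto
    then show "measure (kUnG d 1) (Aw d n (fst p) (snd p)) = (1 / (2 * real d)) ^ n"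
      by (rule Aw_props(2)[OF d])
  qed simp
  also have "\<dots> = real (Suc n) * real (card (Pn d n)) * (1 / (2 * real d)) ^ n"
    unfolding I_def by (simp add: card_cartesian_product algebra_simps)
  finally show ?thesis .
qed

lemma lim0:
  fixes r :: real assumes "0 \<le> r" "r < 1"
  shows "(\<lambda>m. real (Suc (Suc m)) * r ^ m) \<longlonglongrightarrow> 0"
proof -
  have a: "(\<lambda>m. real m * r ^ m) \<longlonglongrightarrow> 0" using powser_times_n_limit_0[of r] assms by simp
  have b: "(\<lambda>m. 2 * r ^ m) \<longlonglongrightarrow> 0" using LIMSEQ_power_zero[of r] assms
    by (intro tendsto_mult_right_zero) simp
  have "(\<lambda>m. real m * r ^ m + 2 * r ^ m) \<longlonglongrightarrow> 0 + 0" by (rule tendsto_add[OF a b])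
  then show ?thesis by (simp add: algebra_simps)
qed

theorem proposition2p8:
  fixes d :: nat
  assumes "d \<ge> 1"
  shows "perc_event d 1 \<in> sets (kUnG d 1) \<and> theta_U 1 d = 0"
proof
  show "perc_event d 1 \<in> sets (kUnG d 1)" by (rule perc_sets)
  define r where "r = (2 * real d - 1) / (2 * real d)"
  have r: "0 \<le> r" "r < 1" unfolding r_def using assms by auto
  have le: "theta_U 1 d \<le> real (Suc (Suc m)) * r ^ m" for m
  proof -
    have "theta_U 1 d \<le> real (Suc (Suc m)) * real (card (Pn d (Suc m))) * (1 / (2 * real d)) ^ Suc m"
      unfolding theta_U_def by (rule bound[OF assms])
    also have "\<dots> \<le> real (Suc (Suc m)) * (2 * real d * (2 * real d - 1) ^ m) * (1 / (2 * real d)) ^ Suc m"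
    proof -
      have "real (card (Pn d (Suc m))) \<le> real (2 * d * (2 * d - 1) ^ m)"
        using card_Pn[of d m] by linarith
      also have "\<dots> = 2 * real d * (2 * real d - 1) ^ m" using assms by (simp add: of_nat_diff)
      finally show ?thesis by (intro mult_right_mono mult_left_mono) auto
    qed
    also have "\<dots> = real (Suc (Suc m)) * r ^ m"
      unfolding r_def using assms by (simp add: power_divide field_simps)
    finally show ?thesis .
  qed
  have "theta_U 1 d \<le> 0"
    by (rule LIMSEQ_le_const[OF lim0[OF r]]) (use le in auto)
  moreover have "theta_U 1 d \<ge> 0" unfolding theta_U_def by simp
  ultimately show "theta_U 1 d = 0" by simp
qed

end
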